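(* Let $\Omega\subseteq\mathbb{R}^3$ be a domain and let $f_0\colon\Omega\to\mathbb{R}$ be a real-valued (twice differentiable) function which is inframonogenic, i.e. $\overline{\partial} f_0\overline{\partial}=0$. Then locally one has \[ f_0(x_0,x_1,x_2)=c_0(2x_0^2+x_1^2+x_2^2)+c_1x_0+c_2+h(x_1,x_2),\] where $c_0,c_1,c_2\in\mathbb{R}$ are constants and $h$ is a harmonic function of the two variables $(x_1,x_2)$.
   Context: $\mathbb{H}$ denotes the real quaternions with basis $e_0=1,e_1,e_2,e_3$ and $e_1^2=e_2^2=e_3^2=e_1e_2e_3=-1$; points of $\mathbb{R}^3$ are $x=x_0+x_1e_1+x_2e_2$. With $\partial_i=\partial/\partial x_i$, $\overline{\partial} g=\partial_0 g+e_1\partial_1 g+e_2\partial_2 g$ (left action), $g\overline{\partial}=\partial_0 g+(\partial_1 g)e_1+(\partial_2 g)e_2$ (right action), and $\overline{\partial} g\overline{\partial}:=\overline{\partial}(g\overline{\partial})$. "Locally" means in a suitable neighborhood of each point of $\Omega$. *)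

theory Defs
  imports "HOL-Analysis.Analysis"
begin

text \<open>Real quaternions, represented as 4-tuples (q0,q1,q2,q3) = q0 + q1 e1 + q2 e2 + q3 e3,
  with the real vector/norm structure of the product type and the Hamilton product below
  (e1^2 = e2^2 = e3^2 = e1 e2 e3 = -1).\<close>

type_synonym quat = "real \<times> real \<times> real \<times> real"

definition qmult :: "quat \<Rightarrow> quat \<Rightarrow> quat" (infixl "\<odot>" 70) where
  "qmult a b = (case a of (a0, a1, a2, a3) \<Rightarrow> case b of (b0, b1, b2, b3) \<Rightarrow>
     (a0*b0 - a1*b1 - a2*b2 - a3*b3,
      a0*b1 + a1*b0 + a2*b3 - a3*b2,
      a0*b2 - a1*b3 + a2*b0 + a3*b1,
      a0*b3 + a1*b2 - a2*b1 + a3*b0))"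

definition qe1 :: quat where "qe1 = (0, 1, 0, 0)"
definition qe2 :: quat where "qe2 = (0, 0, 1, 0)"

definition qreal :: "real \<Rightarrow> quat" where "qreal r = (r, 0, 0, 0)"

definition pdir :: "'a::real_normed_vector \<Rightarrow> ('a \<Rightarrow> 'b::real_normed_vector) \<Rightarrow> 'a \<Rightarrow> 'b" where
  "pdir v g x = vector_derivative (\<lambda>t::real. g (x + t *\<^sub>R v)) (at 0)"

definition d0 :: "(real \<times> real \<times> real \<Rightarrow> 'b::real_normed_vector) \<Rightarrow> real \<times> real \<times> real \<Rightarrow> 'b"
  where "d0 = pdir (1, 0, 0)"
definition d1 :: "(real \<times> real \<times> real \<Rightarrow> 'b::real_normed_vector) \<Rightarrow> real \<times> real \<times> real \<Rightarrow> 'b"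
  where "d1 = pdir (0, 1, 0)"
definition d2 :: "(real \<times> real \<times> real \<Rightarrow> 'b::real_normed_vector) \<Rightarrow> real \<times> real \<times> real \<Rightarrow> 'b"
  where "d2 = pdir (0, 0, 1)"

definition dbar_left :: "(real \<times> real \<times> real \<Rightarrow> quat) \<Rightarrow> real \<times> real \<times> real \<Rightarrow> quat" where
  "dbar_left g x = d0 g x + qe1 \<odot> d1 g x + qe2 \<odot> d2 g x"

definition dbar_right :: "(real \<times> real \<times> real \<Rightarrow> quat) \<Rightarrow> real \<times> real \<times> real \<Rightarrow> quat" where
  "dbar_right g x = d0 g x + d1 g x \<odot> qe1 + d2 g x \<odot> qe2"

definition inframonogenic_on :: "(real \<times> real \<times> real) set \<Rightarrow> (real \<times> real \<times> real \<Rightarrow> quat) \<Rightarrow> bool" where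
  "inframonogenic_on S g \<longleftrightarrow> (\<forall>x\<in>S. dbar_left (dbar_right g) x = 0)"

definition twice_differentiable_on :: "'a::euclidean_space set \<Rightarrow> ('a \<Rightarrow> real) \<Rightarrow> bool" where
  "twice_differentiable_on S f \<longleftrightarrow>
     (\<forall>x\<in>S. f differentiable (at x) \<and> (\<forall>b\<in>Basis. pdir b f differentiable (at x)))"

definition harmonic_on :: "'a::euclidean_space set \<Rightarrow> ('a \<Rightarrow> real) \<Rightarrow> bool" where
  "harmonic_on S h \<longleftrightarrow> twice_differentiable_on S h \<and>
     (\<forall>x\<in>S. (\<Sum>b\<in>Basis. pdir b (pdir b h) x) = 0)"

end

theory Submission
  imports Defs
begin

lemma pdir_eq:
  assumes "(F has_derivative F') (at x)"
  shows "pdir v F x = F' v"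
proof -
  have l: "((\<lambda>t::real. x + t *\<^sub>R v) has_derivative (\<lambda>t. t *\<^sub>R v)) (at 0)"
    by (auto intro!: derivative_eq_intros)
  have "((\<lambda>t::real. F (x + t *\<^sub>R v)) has_derivative (\<lambda>t. F' (t *\<^sub>R v))) (at 0)"
    using has_derivative_compose[OF l, of F F'] assms by simp
  moreover have "(\<lambda>t. F' (t *\<^sub>R v)) = (\<lambda>t. t *\<^sub>R F' v)"
    using has_derivative_bounded_linear[OF assms] by (simp add: linear_simps)
  ultimately have "((\<lambda>t::real. F (x + t *\<^sub>R v)) has_vector_derivative F' v) (at 0)"
    by (simp add: has_vector_derivative_def)
  then show ?thesis unfolding pdir_def by (rule vector_derivative_at)
qed

lemma lin3:
  fixes L :: "real \<times> real \<times> real \<Rightarrow> real"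
  assumes "bounded_linear L"
  shows "L (a, b, c) = a * L (1,0,0) + b * L (0,1,0) + c * L (0,0,1)"
proof -
  have "(a,b,c) = a *\<^sub>R (1,0,0) + b *\<^sub>R (0,1,0) + c *\<^sub>R ((0,0,1)::real\<times>real\<times>real)" by simp
  then have "L (a,b,c) = L (a *\<^sub>R (1,0,0) + b *\<^sub>R (0,1,0) + c *\<^sub>R ((0,0,1)::real\<times>real\<times>real))" by metis
  also have "\<dots> = a * L (1,0,0) + b * L (0,1,0) + c * L (0,0,1)"
    unfolding linear_simps(1)[OF assms] linear_simps(5)[OF assms] by simp
  finally show ?thesis .
qed

lemma line_deriv:
  assumes "(f has_derivative F) (at (x + t *\<^sub>R u))"
  shows "((\<lambda>s. f (x + s *\<^sub>R u)) has_real_derivative F u) (at t)"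
proof -
  have l: "((\<lambda>s::real. x + s *\<^sub>R u) has_derivative (\<lambda>s. s *\<^sub>R u)) (at t)"
    by (auto intro!: derivative_eq_intros)
  have "((\<lambda>s::real. f (x + s *\<^sub>R u)) has_derivative (\<lambda>s. F (s *\<^sub>R u))) (at t)"
    using has_derivative_compose[OF l, of f F] assms by simp
  moreover have "(\<lambda>s. F (s *\<^sub>R u)) = (*) (F u)"
    using has_derivative_bounded_linear[OF assms] by (auto simp add: linear_simps)
  ultimately show ?thesis by (simp add: has_field_derivative_def)
qed

lemma sym_est:
  fixes f :: "'a::real_normed_vector \<Rightarrow> real"
  assumes S: "open S" "x \<in> S" and fd: "\<forall>y\<in>S. (f has_derivative f' y) (at y)"
    and Du: "(Du has_derivative Au) (at x)" and Dueq: "\<forall>y\<in>S. Du y = f' y u" and e: "e > 0"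
  shows "\<exists>h0>0. \<forall>h. 0 < h \<and> h < h0 \<longrightarrow>
    \<bar>f (x + h *\<^sub>R u + h *\<^sub>R v) - f (x + h *\<^sub>R u) - f (x + h *\<^sub>R v) + f x - h\<^sup>2 * Au v\<bar>
      \<le> e * h\<^sup>2 * (2 * norm u + norm v)"
proof -
  have blA: "bounded_linear Au" using Du by (rule has_derivative_bounded_linear)
  obtain d where d: "d > 0" and dd: "\<And>y. norm (y - x) < d \<Longrightarrow> \<bar>Du y - Du x - Au (y - x)\<bar> \<le> e * norm (y - x)"
    using Du e unfolding has_derivative_at_alt by (metis real_norm_def)
  obtain r where r: "r > 0" "ball x r \<subseteq> S" using S open_contains_ball by blast
  have pos: "norm u + norm v + 1 > 0" by (smt (verit) norm_ge_zero)
  define h0 where "h0 = min d r / (norm u + norm v + 1)"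
  have h0: "h0 > 0" unfolding h0_def using d r norm_ge_zero[of u] norm_ge_zero[of v] by (intro divide_pos_pos) (auto, smt (verit) norm_ge_zero)
  show ?thesis
  proof (intro exI[of _ h0] conjI allI impI h0)
    fix h :: real assume hh: "0 < h \<and> h < h0"
    have "h * (norm u + norm v + 1) < h0 * (norm u + norm v + 1)"
      using hh pos by (intro mult_strict_right_mono) auto
    also have "\<dots> = min d r" unfolding h0_def using pos by simp
    finally have hsmall: "h * (norm u + norm v) < min d r"
      using hh by (smt (verit) mult_le_cancel_left norm_ge_zero)
    have nrm: "norm (t *\<^sub>R u + s *\<^sub>R v) < min d r" if "0 \<le> t" "t \<le> h" "0 \<le> s" "s \<le> h" for t s
    proof -
      have "norm (t *\<^sub>R u + s *\<^sub>R v) \<le> t * norm u + s * norm v"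
        using that by (metis abs_of_nonneg norm_scaleR norm_triangle_le order_refl add_mono)
      also have "\<dots> \<le> h * norm u + h * norm v"
        using that by (intro add_mono mult_right_mono) auto
      finally show ?thesis using hsmall by (simp add: distrib_left)
    qed
    have inS: "x + (t *\<^sub>R u + s *\<^sub>R v) \<in> S" if "0 \<le> t" "t \<le> h" "0 \<le> s" "s \<le> h" for t s
    proof -
      have "x + (t *\<^sub>R u + s *\<^sub>R v) \<in> ball x r"
        using nrm[OF that] norm_minus_cancel[of "t *\<^sub>R u + s *\<^sub>R v"] by (simp add: dist_norm)
      then show ?thesis using r by blast
    qed
    define g where "g t = f ((x + h *\<^sub>R v) + t *\<^sub>R u) - f (x + t *\<^sub>R u)" for t
    have gd: "DERIV g t :> Du ((x + h *\<^sub>R v) + t *\<^sub>R u) - Du (x + t *\<^sub>R u)" if "0 \<le> t" "t \<le> h" for t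
    proof -
      have p1: "(x + h *\<^sub>R v) + t *\<^sub>R u \<in> S" using inS[OF that, of h] hh by (simp add: add_ac)
      have p2: "x + t *\<^sub>R u \<in> S" using inS[OF that, of 0] hh by simp
      have "((\<lambda>s. f ((x + h *\<^sub>R v) + s *\<^sub>R u)) has_real_derivative f' ((x + h *\<^sub>R v) + t *\<^sub>R u) u) (at t)"
        using fd p1 by (intro line_deriv) auto
      moreover have "((\<lambda>s. f (x + s *\<^sub>R u)) has_real_derivative f' (x + t *\<^sub>R u) u) (at t)"
        using fd p2 by (intro line_deriv) auto
      ultimately show ?thesis unfolding g_def using Dueq p1 p2
        by (auto intro!: derivative_eq_intros)
    qed
    obtain z where z: "0 < z" "z < h" and mv: "g h - g 0 = (h - 0) * (Du ((x + h *\<^sub>R v) + z *\<^sub>R u) - Du (x + z *\<^sub>R u))"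
      using MVT2[of 0 h g "\<lambda>t. Du ((x + h *\<^sub>R v) + t *\<^sub>R u) - Du (x + t *\<^sub>R u)"] gd hh by auto
    have Delta: "f (x + h *\<^sub>R u + h *\<^sub>R v) - f (x + h *\<^sub>R u) - f (x + h *\<^sub>R v) + f x = g h - g 0"
      unfolding g_def by (simp add: add_ac)
    define w1 where "w1 = z *\<^sub>R u + h *\<^sub>R v"
    define w2 where "w2 = z *\<^sub>R u + 0 *\<^sub>R v"
    have n1: "norm w1 < d" unfolding w1_def using nrm[of z h] z hh by auto
    have n2: "norm w2 < d" unfolding w2_def using nrm[of z 0] z hh by auto
    have b1: "\<bar>Du (x + w1) - Du x - Au w1\<bar> \<le> e * norm w1" using dd[of "x + w1"] n1 by simp
    have b2: "\<bar>Du (x + w2) - Du x - Au w2\<bar> \<le> e * norm w2" using dd[of "x + w2"] n2 by simp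
    have lin: "Au w1 - Au w2 = h * Au v" unfolding w1_def w2_def using blA by (simp add: linear_simps)
    have nw1: "norm w1 \<le> z * norm u + h * norm v" unfolding w1_def
      using z hh by (metis abs_of_nonneg less_imp_le norm_scaleR norm_triangle_le order_refl add_mono)
    have nw2: "norm w2 \<le> z * norm u" unfolding w2_def using z by simp
    have "\<bar>Du (x + w1) - Du (x + w2) - h * Au v\<bar> \<le> e * norm w1 + e * norm w2"
      using b1 b2 lin by linarith
    also have "\<dots> \<le> e * (z * norm u + h * norm v) + e * (z * norm u)"
      using nw1 nw2 e by (intro add_mono mult_left_mono) auto
    also have "\<dots> \<le> e * (h * norm u + h * norm v) + e * (h * norm u)"
      using z e by (intro add_mono mult_left_mono) (auto intro: mult_right_mono)
    also have "\<dots> = e * h * (2 * norm u + norm v)" by (simp add: algebra_simps)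
    finally have est: "\<bar>Du (x + w1) - Du (x + w2) - h * Au v\<bar> \<le> e * h * (2 * norm u + norm v)" .
    have eqs: "(x + h *\<^sub>R v) + z *\<^sub>R u = x + w1" "x + z *\<^sub>R u = x + w2"
      unfolding w1_def w2_def by (simp_all add: add_ac)
    have "f (x + h *\<^sub>R u + h *\<^sub>R v) - f (x + h *\<^sub>R u) - f (x + h *\<^sub>R v) + f x - h\<^sup>2 * Au v
        = h * (Du (x + w1) - Du (x + w2) - h * Au v)"
    proof -
      have "g h - g 0 = h * (Du (x + w1) - Du (x + w2))" using mv unfolding eqs by simp
      then show ?thesis unfolding Delta by (simp add: power2_eq_square algebra_simps)
    qed
    then have "\<bar>f (x + h *\<^sub>R u + h *\<^sub>R v) - f (x + h *\<^sub>R u) - f (x + h *\<^sub>R v) + f x - h\<^sup>2 * Au v\<bar>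
        = h * \<bar>Du (x + w1) - Du (x + w2) - h * Au v\<bar>" using hh by (simp add: abs_mult)
    also have "\<dots> \<le> h * (e * h * (2 * norm u + norm v))" using est hh by (intro mult_left_mono) auto
    finally show "\<bar>f (x + h *\<^sub>R u + h *\<^sub>R v) - f (x + h *\<^sub>R u) - f (x + h *\<^sub>R v) + f x - h\<^sup>2 * Au v\<bar>
      \<le> e * h\<^sup>2 * (2 * norm u + norm v)" by (simp add: power2_eq_square algebra_simps)
  qed
qed


lemma small_zero:
  fixes a C :: real
  assumes C: "C \<ge> 0" and H: "\<And>e. e > 0 \<Longrightarrow> \<bar>a\<bar> \<le> e * C"
  shows "a = 0"
proof (rule ccontr)
  assume "a \<noteq> 0"
  then have a: "\<bar>a\<bar> > 0" by simp
  define e where "e = \<bar>a\<bar> / (2 * (C + 1))"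
  have e: "e > 0" unfolding e_def using a C by simp
  have "e * C < \<bar>a\<bar>"
  proof -
    have "e * C = \<bar>a\<bar> * (C / (2 * (C + 1)))" unfolding e_def by simp
    also have "\<dots> < \<bar>a\<bar> * 1" using a C by (intro mult_strict_left_mono) (auto simp: field_simps)
    finally show ?thesis by simp
  qed
  then show False using H[OF e] by simp
qed

lemma mixed_sym:
  fixes f :: "'a::real_normed_vector \<Rightarrow> real"
  assumes S: "open S" "x \<in> S" and fd: "\<forall>y\<in>S. (f has_derivative f' y) (at y)"
    and Du: "(Du has_derivative Au) (at x)" and Dueq: "\<forall>y\<in>S. Du y = f' y u"
    and Dv: "(Dv has_derivative Av) (at x)" and Dveq: "\<forall>y\<in>S. Dv y = f' y v"
  shows "Au v = Av u"
proof -
  have "Au v - Av u = 0"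
  proof (rule small_zero[of "3 * (norm u + norm v)"])
    fix e :: real assume e: "e > 0"
    obtain h0 where h0: "h0 > 0" and H0: "\<And>h. 0 < h \<and> h < h0 \<Longrightarrow>
      \<bar>f (x + h *\<^sub>R u + h *\<^sub>R v) - f (x + h *\<^sub>R u) - f (x + h *\<^sub>R v) + f x - h\<^sup>2 * Au v\<bar>
      \<le> e * h\<^sup>2 * (2 * norm u + norm v)"
      using sym_est[OF S fd Du Dueq e, of v] by blast
    obtain h1 where h1: "h1 > 0" and H1: "\<And>h. 0 < h \<and> h < h1 \<Longrightarrow>
      \<bar>f (x + h *\<^sub>R v + h *\<^sub>R u) - f (x + h *\<^sub>R v) - f (x + h *\<^sub>R u) + f x - h\<^sup>2 * Av u\<bar>
      \<le> e * h\<^sup>2 * (2 * norm v + norm u)"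
      using sym_est[OF S fd Dv Dveq e, of u] by blast
    define h where "h = min h0 h1 / 2"
    have hp: "0 < h" "h < h0" "h < h1" unfolding h_def using h0 h1 by auto
    define D where "D = f (x + h *\<^sub>R u + h *\<^sub>R v) - f (x + h *\<^sub>R u) - f (x + h *\<^sub>R v) + f x"
    have D2: "f (x + h *\<^sub>R v + h *\<^sub>R u) - f (x + h *\<^sub>R v) - f (x + h *\<^sub>R u) + f x = D"
      unfolding D_def by (simp add: add_ac)
    have a1: "\<bar>D - h\<^sup>2 * Au v\<bar> \<le> e * h\<^sup>2 * (2 * norm u + norm v)" using H0 hp unfolding D_def by blast
    have a2: "\<bar>D - h\<^sup>2 * Av u\<bar> \<le> e * h\<^sup>2 * (2 * norm v + norm u)" using H1 hp D2 by metis
    have eq: "(D - h\<^sup>2 * Av u) - (D - h\<^sup>2 * Au v) = h\<^sup>2 * (Au v - Av u)" by (simp add: algebra_simps)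
    have "h\<^sup>2 * \<bar>Au v - Av u\<bar> = \<bar>(D - h\<^sup>2 * Av u) - (D - h\<^sup>2 * Au v)\<bar>"
      unfolding eq abs_mult by simp
    also have "\<dots> \<le> e * h\<^sup>2 * (2 * norm u + norm v) + e * h\<^sup>2 * (2 * norm v + norm u)"
      using a1 a2 by linarith
    also have "\<dots> \<le> h\<^sup>2 * (e * (3 * (norm u + norm v)))" 
      by (simp add: algebra_simps)
    finally show "\<bar>Au v - Av u\<bar> \<le> e * (3 * (norm u + norm v))"
      using hp by (simp add: mult_le_cancel_left)
  qed simp
  then show ?thesis by simp
qed


lemma basis3: "((1::real),(0::real),(0::real)) \<in> Basis" "((0::real),(1::real),(0::real)) \<in> Basis"
  "((0::real),(0::real),(1::real)) \<in> Basis"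
  by (auto simp: Basis_prod_def zero_prod_def)

lemma pointwise:
  fixes f :: "real \<times> real \<times> real \<Rightarrow> real"
  assumes op: "open \<Omega>" and tw: "twice_differentiable_on \<Omega> f"
    and inf: "inframonogenic_on \<Omega> (\<lambda>x. qreal (f x))" and x: "x \<in> \<Omega>"
  shows "frechet_derivative (pdir (1,0,0) f) (at x) (0,1,0) = 0 \<and>
         frechet_derivative (pdir (1,0,0) f) (at x) (0,0,1) = 0 \<and>
         frechet_derivative (pdir (0,1,0) f) (at x) (1,0,0) = 0 \<and>
         frechet_derivative (pdir (0,0,1) f) (at x) (1,0,0) = 0 \<and>
         frechet_derivative (pdir (1,0,0) f) (at x) (1,0,0) =
           frechet_derivative (pdir (0,1,0) f) (at x) (0,1,0) + frechet_derivative (pdir (0,0,1) f) (at x) (0,0,1)"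
proof -
  define f' where "f' y = frechet_derivative f (at y)" for y
  define D0 where "D0 = pdir (1,0,0) f"
  define D1 where "D1 = pdir (0,1,0) f"
  define D2 where "D2 = pdir (0,0,1) f"
  define A0 where "A0 = frechet_derivative D0 (at x)"
  define A1 where "A1 = frechet_derivative D1 (at x)"
  define A2 where "A2 = frechet_derivative D2 (at x)"
  have fd: "\<forall>y\<in>\<Omega>. (f has_derivative f' y) (at y)"
    using tw unfolding twice_differentiable_on_def f'_def by (simp add: frechet_derivative_works)
  have dA0: "(D0 has_derivative A0) (at x)"
    using tw x basis3 unfolding twice_differentiable_on_def A0_def D0_def by (simp add: frechet_derivative_works)
  have dA1: "(D1 has_derivative A1) (at x)"
    using tw x basis3 unfolding twice_differentiable_on_def A1_def D1_def by (simp add: frechet_derivative_works)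
  have dA2: "(D2 has_derivative A2) (at x)"
    using tw x basis3 unfolding twice_differentiable_on_def A2_def D2_def by (simp add: frechet_derivative_works)
  have e0: "\<forall>y\<in>\<Omega>. D0 y = f' y (1,0,0)" using fd unfolding D0_def by (simp add: pdir_eq)
  have e1: "\<forall>y\<in>\<Omega>. D1 y = f' y (0,1,0)" using fd unfolding D1_def by (simp add: pdir_eq)
  have e2: "\<forall>y\<in>\<Omega>. D2 y = f' y (0,0,1)" using fd unfolding D2_def by (simp add: pdir_eq)
  have s01: "A0 (0,1,0) = A1 (1,0,0)" by (rule mixed_sym[OF op x fd dA0 e0 dA1 e1])
  have s02: "A0 (0,0,1) = A2 (1,0,0)" by (rule mixed_sym[OF op x fd dA0 e0 dA2 e2])
  have gd: "((\<lambda>x. qreal (f x)) has_derivative (\<lambda>w. (f' y w, 0, 0, 0))) (at y)" if "y \<in> \<Omega>" for y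
    unfolding qreal_def using fd that by (auto intro!: derivative_eq_intros simp: zero_prod_def)
  have H: "dbar_right (\<lambda>x. qreal (f x)) y = (D0 y, D1 y, D2 y, 0)" if "y \<in> \<Omega>" for y
  proof -
    have "d0 (\<lambda>x. qreal (f x)) y = (D0 y, 0, 0, 0)" "d1 (\<lambda>x. qreal (f x)) y = (D1 y, 0, 0, 0)"
      "d2 (\<lambda>x. qreal (f x)) y = (D2 y, 0, 0, 0)"
      unfolding d0_def d1_def d2_def using pdir_eq[OF gd[OF that]] e0 e1 e2 that by auto
    then show ?thesis unfolding dbar_right_def by (simp add: qmult_def qe1_def qe2_def)
  qed
  have Hd: "(dbar_right (\<lambda>x. qreal (f x)) has_derivative (\<lambda>w. (A0 w, A1 w, A2 w, 0))) (at x)"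
  proof (rule has_derivative_transform_within_open[OF _ op x])
    show "((\<lambda>y. (D0 y, D1 y, D2 y, 0::real)) has_derivative (\<lambda>w. (A0 w, A1 w, A2 w, 0))) (at x)"
      using dA0 dA1 dA2 by (auto intro!: derivative_eq_intros)
  qed (use H in auto)
  have "dbar_left (dbar_right (\<lambda>x. qreal (f x))) x = 0" using inf x unfolding inframonogenic_on_def by auto
  then have "(A0 (1,0,0), A1 (1,0,0), A2 (1,0,0), 0) + qe1 \<odot> (A0 (0,1,0), A1 (0,1,0), A2 (0,1,0), 0)
     + qe2 \<odot> (A0 (0,0,1), A1 (0,0,1), A2 (0,0,1), 0) = 0"
    unfolding dbar_left_def d0_def d1_def d2_def pdir_eq[OF Hd] .
  then have eqs: "A0 (1,0,0) - A1 (0,1,0) - A2 (0,0,1) = 0" "A1 (1,0,0) + A0 (0,1,0) = 0"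
     "A2 (1,0,0) + A0 (0,0,1) = 0"
    by (simp_all add: qmult_def qe1_def qe2_def zero_prod_def)
  show ?thesis using eqs s01 s02 unfolding A0_def A1_def A2_def D0_def D1_def D2_def by simp
qed


lemma slice_y:
  fixes F :: "real \<times> real \<times> real \<Rightarrow> real"
  assumes "(F has_derivative L) (at (t, y))"
  shows "((\<lambda>y. F (t, y)) has_derivative (\<lambda>w. L (0, w))) (at y)"
proof -
  have l: "((\<lambda>y::real\<times>real. (t, y)) has_derivative (\<lambda>w. (0, w))) (at y)"
    by (auto intro!: derivative_eq_intros)
  show ?thesis using has_derivative_compose[OF l, of F L] assms by simp
qed

lemma slice_t:
  fixes F :: "real \<times> real \<times> real \<Rightarrow> real"
  assumes "(F has_derivative L) (at (t, y))"
  shows "((\<lambda>s. F (s, y)) has_derivative (\<lambda>s. s * L (1, 0, 0))) (at t)"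
proof -
  have l: "((\<lambda>s::real. (s, y)) has_derivative (\<lambda>s. (s, 0, 0))) (at t)"
    by (auto intro!: derivative_eq_intros simp: zero_prod_def)
  have "((\<lambda>s. F (s, y)) has_derivative (\<lambda>s. L (s, 0, 0))) (at t)"
    using has_derivative_compose[OF l, of F L] assms by simp
  moreover have "(\<lambda>s. L (s, 0, 0)) = (\<lambda>s. s * L (1, 0, 0))"
  proof
    fix s show "L (s, 0, 0) = s * L (1, 0, 0)"
      using lin3[OF has_derivative_bounded_linear[OF assms], of s 0 0] by simp
  qed
  ultimately show ?thesis by simp
qed


theorem proposition2p5:
  fixes \<Omega> :: "(real \<times> real \<times> real) set" and f0 :: "real \<times> real \<times> real \<Rightarrow> real"
  assumes "open \<Omega>" and "connected \<Omega>"
    and "twice_differentiable_on \<Omega> f0"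
    and "inframonogenic_on \<Omega> (\<lambda>x. qreal (f0 x))"
  shows "\<forall>p\<in>\<Omega>. \<exists>U. open U \<and> p \<in> U \<and> U \<subseteq> \<Omega> \<and>
           (\<exists>c0 c1 c2 :: real. \<exists>h :: real \<times> real \<Rightarrow> real.
              harmonic_on ((\<lambda>(x0, x1, x2). (x1, x2)) ` U) h \<and>
              (\<forall>(x0, x1, x2)\<in>U.
                 f0 (x0, x1, x2) = c0 * (2 * x0\<^sup>2 + x1\<^sup>2 + x2\<^sup>2) + c1 * x0 + c2 + h (x1, x2)))"
proof
  fix p assume pO: "p \<in> \<Omega>"
  note op = assms(1) and tw = assms(3) and inf = assms(4)
  define f where "f = f0"
  define f' where "f' y = frechet_derivative f (at y)" for y
  define D0 where "D0 = pdir (1,0,0) f"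
  define D1 where "D1 = pdir (0,1,0) f"
  define D2 where "D2 = pdir (0,0,1) f"
  define A0 where "A0 z = frechet_derivative D0 (at z)" for z
  define A1 where "A1 z = frechet_derivative D1 (at z)" for z
  define A2 where "A2 z = frechet_derivative D2 (at z)" for z
  have fd: "(f has_derivative f' y) (at y)" if "y \<in> \<Omega>" for y
    using tw that unfolding twice_differentiable_on_def f'_def f_def by (simp add: frechet_derivative_works)
  have dA0: "(D0 has_derivative A0 z) (at z)" if "z \<in> \<Omega>" for z
    using tw that basis3 unfolding twice_differentiable_on_def A0_def D0_def f_def by (simp add: frechet_derivative_works)
  have dA1: "(D1 has_derivative A1 z) (at z)" if "z \<in> \<Omega>" for z
    using tw that basis3 unfolding twice_differentiable_on_def A1_def D1_def f_def by (simp add: frechet_derivative_works)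
  have dA2: "(D2 has_derivative A2 z) (at z)" if "z \<in> \<Omega>" for z
    using tw that basis3 unfolding twice_differentiable_on_def A2_def D2_def f_def by (simp add: frechet_derivative_works)
  have e0: "D0 y = f' y (1,0,0)" if "y \<in> \<Omega>" for y using fd[OF that] unfolding D0_def by (simp add: pdir_eq)
  have e1: "D1 y = f' y (0,1,0)" if "y \<in> \<Omega>" for y using fd[OF that] unfolding D1_def by (simp add: pdir_eq)
  have e2: "D2 y = f' y (0,0,1)" if "y \<in> \<Omega>" for y using fd[OF that] unfolding D2_def by (simp add: pdir_eq)
  have PW: "A0 z (0,1,0) = 0 \<and> A0 z (0,0,1) = 0 \<and> A1 z (1,0,0) = 0 \<and> A2 z (1,0,0) = 0 \<and>
      A0 z (1,0,0) = A1 z (0,1,0) + A2 z (0,0,1)" if "z \<in> \<Omega>" for z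
    using pointwise[OF op tw inf that] unfolding A0_def A1_def A2_def D0_def D1_def D2_def f_def .
  obtain p0 q where pq: "p = (p0, q)" by (cases p)
  obtain r where r: "r > 0" "ball p r \<subseteq> \<Omega>" using op pO open_contains_ball by blast
  define A where "A = ball p0 (r/2)"
  define B where "B = ball q (r/2)"
  define U where "U = A \<times> B"
  have UO: "U \<subseteq> \<Omega>"
  proof
    fix z assume "z \<in> U"
    then obtain t y where z: "z = (t, y)" "t \<in> A" "y \<in> B" unfolding U_def by auto
    have "dist z p \<le> dist t p0 + dist y q" unfolding z pq dist_Pair_Pair
      by (rule sqrt_sum_squares_le_sum_abs[THEN order_trans]) simp
    also have "\<dots> < r" using z unfolding A_def B_def by (simp add: dist_commute)
    finally show "z \<in> \<Omega>" using r by (auto simp: dist_commute)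
  qed
  have inO: "(t, y) \<in> \<Omega>" if "t \<in> A" "y \<in> B" for t y using UO that unfolding U_def by auto
  have p0A: "p0 \<in> A" and qB: "q \<in> B" unfolding A_def B_def using r by auto
  have oA: "open A" and oB: "open B" and cA: "convex A" and cB: "convex B" unfolding A_def B_def by auto
  have F1: "D0 (t, y) = D0 (t, q)" if t: "t \<in> A" and y: "y \<in> B" for t y
  proof -
    have "\<exists>c. \<forall>y\<in>B. D0 (t, y) = c"
    proof (rule has_derivative_zero_constant[OF cB])
      fix y assume y: "y \<in> B"
      have "((\<lambda>y. D0 (t, y)) has_derivative (\<lambda>w. A0 (t, y) (0, w))) (at y)"
        by (rule slice_y[OF dA0[OF inO[OF t y]]])
      moreover have "(\<lambda>w. A0 (t, y) (0, w)) = (\<lambda>w. 0)"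
      proof
        fix w :: "real \<times> real"
        obtain w1 w2 where "w = (w1, w2)" by (cases w)
        then show "A0 (t, y) (0, w) = 0"
          using lin3[OF has_derivative_bounded_linear[OF dA0[OF inO[OF t y]]], of 0 w1 w2] PW[OF inO[OF t y]]
          by simp
      qed
      ultimately show "((\<lambda>y. D0 (t, y)) has_derivative (\<lambda>h. 0)) (at y within B)"
        by (simp add: has_derivative_at_withinI)
    qed
    then obtain c where "\<forall>y\<in>B. D0 (t, y) = c" by blast
    then show ?thesis using y qB by simp
  qed
  have F2: "D1 (t, y) = D1 (p0, y) \<and> D2 (t, y) = D2 (p0, y)" if t: "t \<in> A" and y: "y \<in> B" for t y
  proof -
    have "\<exists>c. \<forall>t\<in>A. D1 (t, y) = c"
    proof (rule has_derivative_zero_constant[OF cA])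
      fix t assume t: "t \<in> A"
      show "((\<lambda>t. D1 (t, y)) has_derivative (\<lambda>h. 0)) (at t within A)"
        using slice_t[OF dA1[OF inO[OF t y]]] PW[OF inO[OF t y]] by (simp add: has_derivative_at_withinI)
    qed
    moreover have "\<exists>c. \<forall>t\<in>A. D2 (t, y) = c"
    proof (rule has_derivative_zero_constant[OF cA])
      fix t assume t: "t \<in> A"
      show "((\<lambda>t. D2 (t, y)) has_derivative (\<lambda>h. 0)) (at t within A)"
        using slice_t[OF dA2[OF inO[OF t y]]] PW[OF inO[OF t y]] by (simp add: has_derivative_at_withinI)
    qed
    ultimately obtain c c' where "\<forall>t\<in>A. D1 (t, y) = c" "\<forall>t\<in>A. D2 (t, y) = c'" by blast
    then show ?thesis using t p0A by simp
  qed
  have F3: "A1 (t, y) (0,1,0) = A1 (p0, y) (0,1,0) \<and> A2 (t, y) (0,0,1) = A2 (p0, y) (0,0,1)"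
    if t: "t \<in> A" and y: "y \<in> B" for t y
  proof -
    have a: "((\<lambda>y. D1 (t, y)) has_derivative (\<lambda>w. A1 (t, y) (0, w))) (at y)"
      by (rule slice_y[OF dA1[OF inO[OF t y]]])
    have "((\<lambda>y. D1 (p0, y)) has_derivative (\<lambda>w. A1 (p0, y) (0, w))) (at y)"
      by (rule slice_y[OF dA1[OF inO[OF p0A y]]])
    then have "((\<lambda>y. D1 (t, y)) has_derivative (\<lambda>w. A1 (p0, y) (0, w))) (at y)"
      by (rule has_derivative_transform_within_open[OF _ oB y]) (use F2 t in auto)
    from has_derivative_unique[OF a this] have "(\<lambda>w. A1 (t, y) (0, w)) = (\<lambda>w. A1 (p0, y) (0, w))" .
    from fun_cong[OF this, of "(1,0)"] have 1: "A1 (t, y) (0,1,0) = A1 (p0, y) (0,1,0)" by simp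
    have a: "((\<lambda>y. D2 (t, y)) has_derivative (\<lambda>w. A2 (t, y) (0, w))) (at y)"
      by (rule slice_y[OF dA2[OF inO[OF t y]]])
    have "((\<lambda>y. D2 (p0, y)) has_derivative (\<lambda>w. A2 (p0, y) (0, w))) (at y)"
      by (rule slice_y[OF dA2[OF inO[OF p0A y]]])
    then have "((\<lambda>y. D2 (t, y)) has_derivative (\<lambda>w. A2 (p0, y) (0, w))) (at y)"
      by (rule has_derivative_transform_within_open[OF _ oB y]) (use F2 t in auto)
    from has_derivative_unique[OF a this] have "(\<lambda>w. A2 (t, y) (0, w)) = (\<lambda>w. A2 (p0, y) (0, w))" .
    from fun_cong[OF this, of "(0,1)"] have 2: "A2 (t, y) (0,0,1) = A2 (p0, y) (0,0,1)" by simp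
    show ?thesis using 1 2 by simp
  qed
  define K where "K = A0 (p0, q) (1,0,0)"
  define c1 where "c1 = D0 (p0, q) - K * p0"
  have F4: "D0 (t, y) = K * t + c1" if t: "t \<in> A" and y: "y \<in> B" for t y
  proof -
    have "\<exists>c. \<forall>t\<in>A. D0 (t, q) - K * t = c"
    proof (rule has_derivative_zero_constant[OF cA])
      fix t assume t: "t \<in> A"
      have "A0 (t, q) (1,0,0) = K"
        using PW[OF inO[OF t qB]] PW[OF inO[OF p0A qB]] F3[OF t qB] unfolding K_def by simp
      then show "((\<lambda>t. D0 (t, q) - K * t) has_derivative (\<lambda>h. 0)) (at t within A)"
      proof -
        have "((\<lambda>t. D0 (t, q)) has_derivative (\<lambda>s. s * K)) (at t)"
          using slice_t[OF dA0[OF inO[OF t qB]]] \<open>A0 (t, q) (1,0,0) = K\<close> by simp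
        then have "((\<lambda>t. D0 (t, q) - K * t) has_derivative (\<lambda>s. s * K - K * s)) (at t)"
          by (auto intro!: derivative_eq_intros)
        moreover have "(\<lambda>s. s * K - K * s) = (\<lambda>s. 0)" by (auto simp: algebra_simps)
        ultimately show ?thesis by (simp add: has_derivative_at_withinI)
      qed
    qed
    then obtain c where "\<forall>t\<in>A. D0 (t, q) - K * t = c" by blast
    then have "D0 (t, q) - K * t = D0 (p0, q) - K * p0" using t p0A by simp
    then show ?thesis using F1[OF t y] unfolding c1_def by simp
  qed
  define C where "C y = f (p0, y) - K / 2 * p0\<^sup>2 - c1 * p0" for y
  have F5: "f (t, y) = K / 2 * t\<^sup>2 + c1 * t + C y" if t: "t \<in> A" and y: "y \<in> B" for t y
  proof -
    have "\<exists>c. \<forall>t\<in>A. f (t, y) - K / 2 * t\<^sup>2 - c1 * t = c"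
    proof (rule has_derivative_zero_constant[OF cA])
      fix t assume t: "t \<in> A"
      have "((\<lambda>t. f (t, y)) has_derivative (\<lambda>s. s * f' (t, y) (1,0,0))) (at t)"
        by (rule slice_t[OF fd[OF inO[OF t y]]])
      then have "((\<lambda>t. f (t, y)) has_derivative (\<lambda>s. s * (K * t + c1))) (at t)"
        using e0[OF inO[OF t y]] F4[OF t y] by simp
      then have "((\<lambda>t. f (t, y) - K / 2 * t\<^sup>2 - c1 * t) has_derivative
          (\<lambda>s. s * (K * t + c1) - K / 2 * (2 * t * s) - c1 * s)) (at t)"
        by (auto intro!: derivative_eq_intros)
      moreover have "(\<lambda>s. s * (K * t + c1) - K / 2 * (2 * t * s) - c1 * s) = (\<lambda>s. 0)"
        by (auto simp: algebra_simps)
      ultimately show "((\<lambda>t. f (t, y) - K / 2 * t\<^sup>2 - c1 * t) has_derivative (\<lambda>h. 0)) (at t within A)"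
        by (simp add: has_derivative_at_withinI)
    qed
    then obtain c where "\<forall>t\<in>A. f (t, y) - K / 2 * t\<^sup>2 - c1 * t = c" by blast
    then have "f (t, y) - K / 2 * t\<^sup>2 - c1 * t = f (p0, y) - K / 2 * p0\<^sup>2 - c1 * p0" using t p0A by simp
    then show ?thesis unfolding C_def by simp
  qed
  have F6: "A1 (p0, y) (0,1,0) + A2 (p0, y) (0,0,1) = K" if y: "y \<in> B" for y
  proof -
    have a: "((\<lambda>s. D0 (s, y)) has_derivative (\<lambda>s. s * A0 (p0, y) (1,0,0))) (at p0)"
      by (rule slice_t[OF dA0[OF inO[OF p0A y]]])
    have "((\<lambda>s. K * s + c1) has_derivative (\<lambda>s. s * K)) (at p0)"
      by (auto intro!: derivative_eq_intros)
    then have "((\<lambda>s. D0 (s, y)) has_derivative (\<lambda>s. s * K)) (at p0)"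
      by (rule has_derivative_transform_within_open[OF _ oA p0A]) (use F4 y in auto)
    from has_derivative_unique[OF a this] have "(\<lambda>s. s * A0 (p0, y) (1,0,0)) = (\<lambda>s. s * K)" .
    from fun_cong[OF this, of 1] have "A0 (p0, y) (1,0,0) = K" by simp
    then show ?thesis using PW[OF inO[OF p0A y]] by simp
  qed
  define c0 where "c0 = K / 4"
  define h where "h y = C y - c0 * ((fst y)\<^sup>2 + (snd y)\<^sup>2)" for y
  have img: "(\<lambda>(x0, x1, x2). (x1, x2)) ` U = B"
  proof
    show "(\<lambda>(x0, x1, x2). (x1, x2)) ` U \<subseteq> B" unfolding U_def by auto
    show "B \<subseteq> (\<lambda>(x0, x1, x2). (x1, x2)) ` U"
    proof
      fix y assume "y \<in> B"
      then have "(p0, y) \<in> U" unfolding U_def using p0A by auto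
      then show "y \<in> (\<lambda>(x0, x1, x2). (x1, x2)) ` U" by (force simp: image_iff)
    qed
  qed
  have hd: "(h has_derivative (\<lambda>w. f' (p0, y) (0, w) - c0 * (2 * fst y * fst w + 2 * snd y * snd w))) (at y)"
    if y: "y \<in> B" for y
  proof -
    have "((\<lambda>y. f (p0, y)) has_derivative (\<lambda>w. f' (p0, y) (0, w))) (at y)"
      by (rule slice_y[OF fd[OF inO[OF p0A y]]])
    then show ?thesis unfolding h_def C_def
      by (auto intro!: derivative_eq_intros simp: algebra_simps)
  qed
  have ph1: "pdir (1, 0) h y = D1 (p0, y) - 2 * c0 * fst y" if y: "y \<in> B" for y
    using pdir_eq[OF hd[OF y]] e1[OF inO[OF p0A y]] by simp
  have ph2: "pdir (0, 1) h y = D2 (p0, y) - 2 * c0 * snd y" if y: "y \<in> B" for y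
    using pdir_eq[OF hd[OF y]] e2[OF inO[OF p0A y]] by simp
  have dph1: "(pdir (1, 0) h has_derivative (\<lambda>w. A1 (p0, y) (0, w) - 2 * c0 * fst w)) (at y)"
    if y: "y \<in> B" for y
  proof -
    have "((\<lambda>y. D1 (p0, y)) has_derivative (\<lambda>w. A1 (p0, y) (0, w))) (at y)"
      by (rule slice_y[OF dA1[OF inO[OF p0A y]]])
    then have "((\<lambda>y. D1 (p0, y) - 2 * c0 * fst y) has_derivative (\<lambda>w. A1 (p0, y) (0, w) - 2 * c0 * fst w)) (at y)"
      by (auto intro!: derivative_eq_intros)
    then show ?thesis
      by (rule has_derivative_transform_within_open[OF _ oB y]) (use ph1 in auto)
  qed
  have dph2: "(pdir (0, 1) h has_derivative (\<lambda>w. A2 (p0, y) (0, w) - 2 * c0 * snd w)) (at y)"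
    if y: "y \<in> B" for y
  proof -
    have "((\<lambda>y. D2 (p0, y)) has_derivative (\<lambda>w. A2 (p0, y) (0, w))) (at y)"
      by (rule slice_y[OF dA2[OF inO[OF p0A y]]])
    then have "((\<lambda>y. D2 (p0, y) - 2 * c0 * snd y) has_derivative (\<lambda>w. A2 (p0, y) (0, w) - 2 * c0 * snd w)) (at y)"
      by (auto intro!: derivative_eq_intros)
    then show ?thesis
      by (rule has_derivative_transform_within_open[OF _ oB y]) (use ph2 in auto)
  qed
  have basis2: "(Basis :: (real \<times> real) set) = {(1, 0), (0, 1)}"
    by (auto simp: Basis_prod_def zero_prod_def)
  have harm: "harmonic_on B h"
    unfolding harmonic_on_def twice_differentiable_on_def basis2
  proof (intro conjI ballI)
    fix y assume y: "y \<in> B"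
    show "h differentiable at y" using hd[OF y] by (rule differentiableI)
    fix b :: "real \<times> real" assume "b \<in> {(1, 0), (0, 1)}"
    then show "pdir b h differentiable at y"
      using differentiableI[OF dph1[OF y]] differentiableI[OF dph2[OF y]] by auto
  next
    fix y assume y: "y \<in> B"
    have "(\<Sum>b\<in>{(1::real, 0::real), (0, 1)}. pdir b (pdir b h) y)
        = pdir (1, 0) (pdir (1, 0) h) y + pdir (0, 1) (pdir (0, 1) h) y" by simp
    also have "\<dots> = (A1 (p0, y) (0, 1, 0) - 2 * c0) + (A2 (p0, y) (0, 0, 1) - 2 * c0)"
      using pdir_eq[OF dph1[OF y]] pdir_eq[OF dph2[OF y]] by simp
    also have "\<dots> = 0" using F6[OF y] unfolding c0_def by simp
    finally show "(\<Sum>b\<in>{(1::real, 0::real), (0, 1)}. pdir b (pdir b h) y) = 0" .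
  qed
  show "\<exists>U. open U \<and> p \<in> U \<and> U \<subseteq> \<Omega> \<and>
           (\<exists>c0 c1 c2 :: real. \<exists>h :: real \<times> real \<Rightarrow> real.
              harmonic_on ((\<lambda>(x0, x1, x2). (x1, x2)) ` U) h \<and>
              (\<forall>(x0, x1, x2)\<in>U.
                 f0 (x0, x1, x2) = c0 * (2 * x0\<^sup>2 + x1\<^sup>2 + x2\<^sup>2) + c1 * x0 + c2 + h (x1, x2)))"
  proof (intro exI conjI)
    show "open U" unfolding U_def using oA oB by (simp add: open_Times)
    show "p \<in> U" unfolding U_def pq using p0A qB by simp
    show "U \<subseteq> \<Omega>" by (rule UO)
    show "harmonic_on ((\<lambda>(x0, x1, x2). (x1, x2)) ` U) h" unfolding img by (rule harm)
    show "\<forall>(x0, x1, x2)\<in>U. f0 (x0, x1, x2) = c0 * (2 * x0\<^sup>2 + x1\<^sup>2 + x2\<^sup>2) + c1 * x0 + 0 + h (x1, x2)"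
    proof (clarify)
      fix x0 x1 x2 assume "(x0, x1, x2) \<in> U"
      then have t: "x0 \<in> A" and y: "(x1, x2) \<in> B" unfolding U_def by auto
      show "f0 (x0, x1, x2) = c0 * (2 * x0\<^sup>2 + x1\<^sup>2 + x2\<^sup>2) + c1 * x0 + 0 + h (x1, x2)"
        using F5[OF t y] unfolding f_def h_def c0_def by (simp add: algebra_simps)
    qed
  qed
qed

end
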